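(* Let $M, N \in \mathbb{N}$, let $y_1,\dots,y_N \in \mathbb{R}^2$ be sample points, and let $x_0, x_1, \dots, x_M \in \mathbb{R}^2$ be the successive robot positions produced by the single-agent exploration algorithm described in the context. Define weights recursively by $n_0(y_j) = \frac{1}{N}$ for all $j$. For $i = 1,\dots,M$, let $(\pi^\star_{ij})_{j=1}^N$ be an optimal solution, and $\tilde W(i)$ the optimal value, of $$\min_{\pi_{i1},\dots,\pi_{iN}} \sum_{j=1}^N \pi_{ij}\|x_i - y_j\| \quad\text{s.t.}\quad \pi_{ij} \ge 0,\ \sum_{j=1}^N \pi_{ij} = \frac{1}{M},\ \pi_{ij} \le \min\!\left(n_{i-1}(y_j), \tfrac{1}{M}\right)\ \forall j,$$ and set $n_i(y_j) = n_{i-1}(y_j) - \pi^\star_{ij}$. For $0 \le t \le M$, let $\mu_t$ be the discrete measure that assigns mass $\frac{1}{M}$ to each of $x_1,\dots,x_t$ and an additional mass $\frac{M-t}{M}$ to $x_t$ (for $t=0$, $\mu_0$ is the unit mass at $x_0$). Let $\nu$ assign mass $\frac{1}{N}$ to each $y_j$. Let $W(t)$ be the optimal value of the transportation linear program $$\min_{\gamma \ge 0} \sum_{a,j} \gamma_{aj}\|p_a - y_j\| \quad \text{s.t.}\quad \sum_j \gamma_{aj} = \mu_t(p_a)\ \forall a,\quad \sum_a \gamma_{aj} = \frac{1}{N}\ \forall j,$$ where $p_a$ ranges over the atoms of $\mu_t$ and $\mu_t(p_a)$ is the mass of $\mu_t$ at $p_a$ (i.e. the Wasserstein-1 distance between $\mu_t$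 and $\nu$). Then for every $0 \le t \le M$, $$W(t) \le \sum_{i=1}^{t} \tilde W(i) + \sum_{j=1}^N n_t(y_j)\,\|x_t - y_j\|.$$
   Context: $\|\cdot\|$ is the Euclidean norm. Single-agent exploration algorithm: a robot starts at $x_0$ and has an energy budget of $M$ discrete time steps. At each step $t$, it picks a goal point among sample points with positive weight $n_t(y_j)$, using a receding-horizon cost. The next position $x_{t+1}$ is then whatever point an arbitrary given motion controller reaches when steering toward that goal, so $x_{t+1}$ may differ from the goal. After moving, the weights are updated by $n_{t+1}(y_j) = n_t(y_j) - \pi^\star_{(t+1)j}$, where $\pi^\star_{(t+1)j}$ solves the linear program stated in the claim. Standing assumption (Assumption 1 of the paper): at time $t$, each past robot point $x_1,\dots,x_t$ carries mass $\frac{1}{M}$. The not-yet-determined future robot points $x_{t+1},\dots,x_M$ are all regarded as located at the current position $x_t$, carrying total mass $\frac{M-t}{M}$. This is what the measure $\mu_t$ encodes. *)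

theory Defs
  imports "HOL-Analysis.Analysis"
begin

definition step_feasible ::
  "nat \<Rightarrow> nat \<Rightarrow> (nat \<Rightarrow> real) \<Rightarrow> (nat \<Rightarrow> real) \<Rightarrow> bool" where
  "step_feasible M N nprev p \<longleftrightarrow>
     (\<forall>j\<in>{1..N}. 0 \<le> p j \<and> p j \<le> min (nprev j) (1 / real M)) \<and>
     (\<Sum>j=1..N. p j) = 1 / real M"

definition step_cost ::
  "nat \<Rightarrow> real^2 \<Rightarrow> (nat \<Rightarrow> real^2) \<Rightarrow> (nat \<Rightarrow> real) \<Rightarrow> real" where
  "step_cost N xi y p = (\<Sum>j=1..N. p j * norm (xi - y j))"

definition step_optimal ::
  "nat \<Rightarrow> nat \<Rightarrow> real^2 \<Rightarrow> (nat \<Rightarrow> real^2) \<Rightarrow> (nat \<Rightarrow> real) \<Rightarrow> (nat \<Rightarrow> real) \<Rightarrow> bool" where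
  "step_optimal M N xi y nprev p \<longleftrightarrow>
     step_feasible M N nprev p \<and>
     (\<forall>q. step_feasible M N nprev q \<longrightarrow> step_cost N xi y p \<le> step_cost N xi y q)"

definition mu_t :: "nat \<Rightarrow> (nat \<Rightarrow> real^2) \<Rightarrow> nat \<Rightarrow> real^2 \<Rightarrow> real" where
  "mu_t M x t p = (\<Sum>i\<in>{1..t}. if x i = p then 1 / real M else 0)
                  + (if x t = p then (real M - real t) / real M else 0)"

definition atoms_mu :: "(nat \<Rightarrow> real^2) \<Rightarrow> nat \<Rightarrow> (real^2) set" where
  "atoms_mu x t = x ` insert t {1..t}"

definition transport_feasible ::
  "nat \<Rightarrow> nat \<Rightarrow> (nat \<Rightarrow> real^2) \<Rightarrow> nat \<Rightarrow> (real^2 \<Rightarrow> nat \<Rightarrow> real) \<Rightarrow> bool" where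
  "transport_feasible M N x t g \<longleftrightarrow>
     (\<forall>a\<in>atoms_mu x t. \<forall>j\<in>{1..N}. 0 \<le> g a j) \<and>
     (\<forall>a\<in>atoms_mu x t. (\<Sum>j=1..N. g a j) = mu_t M x t a) \<and>
     (\<forall>j\<in>{1..N}. (\<Sum>a\<in>atoms_mu x t. g a j) = 1 / real N)"

definition transport_cost ::
  "nat \<Rightarrow> (nat \<Rightarrow> real^2) \<Rightarrow> (nat \<Rightarrow> real^2) \<Rightarrow> nat \<Rightarrow> (real^2 \<Rightarrow> nat \<Rightarrow> real) \<Rightarrow> real" where
  "transport_cost N x y t g = (\<Sum>a\<in>atoms_mu x t. \<Sum>j=1..N. g a j * norm (a - y j))"

definition W_t :: "nat \<Rightarrow> nat \<Rightarrow> (nat \<Rightarrow> real^2) \<Rightarrow> (nat \<Rightarrow> real^2) \<Rightarrow> nat \<Rightarrow> real" where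
  "W_t M N x y t = Inf (transport_cost N x y t ` {g. transport_feasible M N x t g})"

end

theory Submission
  imports Defs
begin

lemma sum_if_eq:
  assumes "finite A" "finite S" "\<forall>i\<in>S. x i \<in> A"
  shows "(\<Sum>a\<in>A. \<Sum>i\<in>S. if x i = a then h i a else 0) = (\<Sum>i\<in>S. h i (x i))"
proof -
  have "(\<Sum>a\<in>A. \<Sum>i\<in>S. if x i = a then h i a else 0) = (\<Sum>i\<in>S. \<Sum>a\<in>A. if x i = a then h i a else 0)"
    by (rule sum.swap)
  also have "\<dots> = (\<Sum>i\<in>S. h i (x i))"
    using assms by (intro sum.cong) (auto simp: sum.delta)
  finally show ?thesis .
qed

theorem theorem1:
  fixes M N :: nat
    and x y :: "nat \<Rightarrow> real^2"
    and n pi :: "nat \<Rightarrow> nat \<Rightarrow> real"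
    and Wtil :: "nat \<Rightarrow> real"
    and t :: nat
  assumes "M \<ge> 1" and "N \<ge> 1"
    and n0: "\<forall>j\<in>{1..N}. n 0 j = 1 / real N"
    and opt: "\<forall>i\<in>{1..M}. step_optimal M N (x i) y (n (i - 1)) (pi i)"
    and val: "\<forall>i\<in>{1..M}. Wtil i = step_cost N (x i) y (pi i)"
    and upd: "\<forall>i\<in>{1..M}. \<forall>j\<in>{1..N}. n i j = n (i - 1) j - pi i j"
    and "t \<le> M"
  shows "W_t M N x y t \<le> (\<Sum>i=1..t. Wtil i) + (\<Sum>j=1..N. n t j * norm (x t - y j))"
proof -
  have feas: "\<And>i j. i \<in> {1..M} \<Longrightarrow> j \<in> {1..N} \<Longrightarrow> 0 \<le> pi i j \<and> pi i j \<le> n (i - 1) j"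
    using opt unfolding step_optimal_def step_feasible_def by auto
  have psum: "\<And>i. i \<in> {1..M} \<Longrightarrow> (\<Sum>j=1..N. pi i j) = 1 / real M"
    using opt unfolding step_optimal_def step_feasible_def by auto
  have inv: "i \<le> M \<longrightarrow> (\<forall>j\<in>{1..N}. 0 \<le> n i j \<and> n i j = 1 / real N - (\<Sum>k=1..i. pi k j))
        \<and> (\<Sum>j=1..N. n i j) = 1 - real i / real M" for i
  proof (induction i)
    case 0
    then show ?case using n0 \<open>N \<ge> 1\<close> by simp
  next
    case (Suc i)
    show ?case
    proof
      assume h: "Suc i \<le> M"
      then have IH: "\<forall>j\<in>{1..N}. 0 \<le> n i j \<and> n i j = 1 / real N - (\<Sum>k=1..i. pi k j)"
        "(\<Sum>j=1..N. n i j) = 1 - real i / real M" using Suc by auto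
      have si: "Suc i \<in> {1..M}" using h by auto
      have a: "\<forall>j\<in>{1..N}. 0 \<le> n (Suc i) j \<and> n (Suc i) j = 1 / real N - (\<Sum>k=1..Suc i. pi k j)"
        using IH(1) feas[OF si] upd si by auto
      have "(\<Sum>j=1..N. n (Suc i) j) = (\<Sum>j=1..N. n i j - pi (Suc i) j)"
        using upd si by (intro sum.cong) auto
      also have "\<dots> = 1 - real i / real M - 1 / real M"
        using IH(2) psum[OF si] by (simp add: sum_subtractf)
      also have "\<dots> = 1 - real (Suc i) / real M" by (simp add: add_divide_distrib)
      finally show "(\<forall>j\<in>{1..N}. 0 \<le> n (Suc i) j \<and> n (Suc i) j = 1 / real N - (\<Sum>k=1..Suc i. pi k j))
        \<and> (\<Sum>j=1..N. n (Suc i) j) = 1 - real (Suc i) / real M" by (rule conjI[OF a])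
    qed
  qed
  have nt: "\<forall>j\<in>{1..N}. 0 \<le> n t j \<and> n t j = 1 / real N - (\<Sum>k=1..t. pi k j)"
    "(\<Sum>j=1..N. n t j) = 1 - real t / real M" using inv[of t] \<open>t \<le> M\<close> by auto
  define A where "A = atoms_mu x t"
  have finA: "finite A" unfolding A_def atoms_mu_def by simp
  have inA: "\<forall>i\<in>{1..t}. x i \<in> A" "x t \<in> A" unfolding A_def atoms_mu_def by auto
  have tM: "\<And>i. i \<in> {1..t} \<Longrightarrow> i \<in> {1..M}" using \<open>t \<le> M\<close> by auto
  define g where "g a j = (\<Sum>i\<in>{1..t}. if x i = a then pi i j else 0) + (if x t = a then n t j else 0)"
    for a j
  have gf: "transport_feasible M N x t g"
    unfolding transport_feasible_def A_def[symmetric]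
  proof (intro conjI ballI)
    fix a j assume "a \<in> A" and jN: "j \<in> {1..N}"
    then have "0 \<le> n t j" using nt(1) by blast
    then show "0 \<le> g a j" unfolding g_def using feas[OF tM] jN
      by (intro add_nonneg_nonneg sum_nonneg) auto
  next
    fix a assume "a \<in> A"
    have "(\<Sum>j=1..N. g a j) = (\<Sum>i\<in>{1..t}. if x i = a then (\<Sum>j=1..N. pi i j) else 0)
         + (if x t = a then (\<Sum>j=1..N. n t j) else 0)"
      unfolding g_def sum.distrib by (subst sum.swap) (auto intro!: sum.cong)
    also have "\<dots> = (\<Sum>i\<in>{1..t}. if x i = a then 1 / real M else 0)
         + (if x t = a then (real M - real t) / real M else 0)"
    proof -
      have "(\<Sum>i\<in>{1..t}. if x i = a then (\<Sum>j=1..N. pi i j) else 0)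
          = (\<Sum>i\<in>{1..t}. if x i = a then 1 / real M else 0)"
        using psum[OF tM] by (intro sum.cong) auto
      moreover have "(\<Sum>j=1..N. n t j) = (real M - real t) / real M"
        using nt(2) \<open>M \<ge> 1\<close> by (simp add: field_simps)
      ultimately show ?thesis by simp
    qed
    finally show "(\<Sum>j=1..N. g a j) = mu_t M x t a" unfolding mu_t_def .
  next
    fix j assume j: "j \<in> {1..N}"
    have "(\<Sum>a\<in>A. g a j) = (\<Sum>a\<in>A. \<Sum>i\<in>{1..t}. if x i = a then pi i j else 0)
          + (\<Sum>a\<in>A. if x t = a then n t j else 0)"
      unfolding g_def sum.distrib ..
    also have "\<dots> = (\<Sum>i\<in>{1..t}. pi i j) + n t j"
      using sum_if_eq[OF finA _ inA(1), of "\<lambda>i a. pi i j"] inA(2) finA by (simp add: sum.delta)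
    also have "\<dots> = 1 / real N" using nt(1) j by simp
    finally show "(\<Sum>a\<in>A. g a j) = 1 / real N" .
  qed
  have cost: "transport_cost N x y t g = (\<Sum>i=1..t. Wtil i) + (\<Sum>j=1..N. n t j * norm (x t - y j))"
  proof -
    have "transport_cost N x y t g = (\<Sum>j=1..N. \<Sum>a\<in>A. g a j * norm (a - y j))"
      unfolding transport_cost_def A_def[symmetric] by (rule sum.swap)
    also have "\<dots> = (\<Sum>j=1..N. (\<Sum>a\<in>A. \<Sum>i\<in>{1..t}. if x i = a then pi i j * norm (a - y j) else 0)
          + (\<Sum>a\<in>A. if x t = a then n t j * norm (a - y j) else 0))"
      unfolding g_def sum.distrib[symmetric] distrib_right sum_distrib_right
      by (intro sum.cong refl) (auto intro!: sum.cong)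
    also have "\<dots> = (\<Sum>j=1..N. (\<Sum>i\<in>{1..t}. pi i j * norm (x i - y j)) + n t j * norm (x t - y j))"
    proof (intro sum.cong refl)
      fix j
      show "(\<Sum>a\<in>A. \<Sum>i\<in>{1..t}. if x i = a then pi i j * norm (a - y j) else 0)
          + (\<Sum>a\<in>A. if x t = a then n t j * norm (a - y j) else 0)
          = (\<Sum>i\<in>{1..t}. pi i j * norm (x i - y j)) + n t j * norm (x t - y j)"
        using sum_if_eq[OF finA _ inA(1), of "\<lambda>i a. pi i j * norm (a - y j)"] inA(2) finA
        by (simp add: sum.delta)
    qed
    also have "\<dots> = (\<Sum>i=1..t. \<Sum>j=1..N. pi i j * norm (x i - y j)) + (\<Sum>j=1..N. n t j * norm (x t - y j))"
      by (simp add: sum.distrib) (rule sum.swap)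
    also have "(\<Sum>i=1..t. \<Sum>j=1..N. pi i j * norm (x i - y j)) = (\<Sum>i=1..t. Wtil i)"
      using val tM unfolding step_cost_def by (intro sum.cong) auto
    finally show ?thesis .
  qed
  have bdd: "bdd_below (transport_cost N x y t ` {g. transport_feasible M N x t g})"
  proof (rule bdd_belowI[of _ 0])
    fix c assume "c \<in> transport_cost N x y t ` {g. transport_feasible M N x t g}"
    then obtain h where h: "transport_feasible M N x t h" "c = transport_cost N x y t h" by auto
    then show "0 \<le> c" unfolding transport_cost_def transport_feasible_def
      by (auto intro!: sum_nonneg)
  qed
  have "W_t M N x y t \<le> transport_cost N x y t g"
    unfolding W_t_def using gf bdd by (intro cInf_lower) auto
  then show ?thesis using cost by simp
qed

end
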